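(* Let $A_1A_2A_3$ be a gyrotriangle in the Einstein gyrovector space $\mathbb{R}^n_s$ that possesses a circumgyrocircle, with circumgyrocenter $O$ and circumgyroradius $R$, and let $\gamma_{ij}=\gamma_{\ominus A_i\oplus A_j}$, $\gamma_R=(1-R^2/s^2)^{-1/2}$. Let $A\in(A_1\oplus\mathrm{span}\{\ominus A_1\oplus A_2,\ominus A_1\oplus A_3\})\cap\mathbb{R}^n_s$ have gyrobarycentric representation $A=\frac{m_1\gamma_{A_1}A_1+m_2\gamma_{A_2}A_2+m_3\gamma_{A_3}A_3}{m_1\gamma_{A_1}+m_2\gamma_{A_2}+m_3\gamma_{A_3}}$, and let $d=\|\ominus A\oplus O\|$. Then $$d=\sqrt{1-\frac{2s^2K}{M^2\gamma_R^2R^2}}\;R,$$ where $K=m_1m_2(\gamma_{12}-1)+m_1m_3(\gamma_{13}-1)+m_2m_3(\gamma_{23}-1)$ and $M=m_1+m_2+m_3$.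
   Context: Fix $s>0$, $n\ge2$; $\mathbb{R}^n_s=\{v\in\mathbb{R}^n:\|v\|<s\}$ with Einstein addition $u\oplus v=\frac{1}{1+u\cdot v/s^2}\{u+\frac{1}{\gamma_u}v+\frac{1}{s^2}\frac{\gamma_u}{1+\gamma_u}(u\cdot v)u\}$, $\gamma_v=(1-\|v\|^2/s^2)^{-1/2}$, $\ominus v=-v$. A gyrotriangle $A_1A_2A_3$ has $\ominus A_1\oplus A_2,\ominus A_1\oplus A_3$ linearly independent. Its circumgyrocenter is the point $O$ of $(A_1\oplus\mathrm{span}\{\ominus A_1\oplus A_2,\ominus A_1\oplus A_3\})\cap\mathbb{R}^n_s$ equigyrodistant from the vertices; the circumgyroradius is $R=\|\ominus A_1\oplus O\|$; the circumgyrocircle is the set of points of that gyroplane at gyrodistance $R$ from $O$. *)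

theory Defs
  imports "HOL-Analysis.Analysis"
begin

definition ein_gamma :: "real \<Rightarrow> real^'n \<Rightarrow> real" where
  "ein_gamma s v = 1 / sqrt (1 - (norm v)\<^sup>2 / s\<^sup>2)"

definition ein_ball :: "real \<Rightarrow> (real^'n) set" where
  "ein_ball s = {v. norm v < s}"

definition ein_add :: "real \<Rightarrow> real^'n \<Rightarrow> real^'n \<Rightarrow> real^'n" where
  "ein_add s u v =
     (1 / (1 + (u \<bullet> v) / s\<^sup>2)) *\<^sub>R
       (u + (1 / ein_gamma s u) *\<^sub>R v
          + ((1 / s\<^sup>2) * (ein_gamma s u / (1 + ein_gamma s u)) * (u \<bullet> v)) *\<^sub>R u)"

definition ein_gyrodist :: "real \<Rightarrow> real^'n \<Rightarrow> real^'n \<Rightarrow> real" where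
  "ein_gyrodist s x y = norm (ein_add s (- x) y)"

definition gyrotriangle :: "real \<Rightarrow> real^'n \<Rightarrow> real^'n \<Rightarrow> real^'n \<Rightarrow> bool" where
  "gyrotriangle s A1 A2 A3 \<longleftrightarrow>
     A1 \<in> ein_ball s \<and> A2 \<in> ein_ball s \<and> A3 \<in> ein_ball s \<and>
     (\<forall>a b. a *\<^sub>R ein_add s (- A1) A2 + b *\<^sub>R ein_add s (- A1) A3 = 0 \<longrightarrow> a = 0 \<and> b = 0)"

definition gyroplane :: "real \<Rightarrow> real^'n \<Rightarrow> real^'n \<Rightarrow> real^'n \<Rightarrow> (real^'n) set" where
  "gyroplane s A1 A2 A3 =
     (ein_add s A1 ` span {ein_add s (- A1) A2, ein_add s (- A1) A3}) \<inter> ein_ball s"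

definition circumgyrocenter :: "real \<Rightarrow> real^'n \<Rightarrow> real^'n \<Rightarrow> real^'n \<Rightarrow> real^'n \<Rightarrow> bool" where
  "circumgyrocenter s A1 A2 A3 Oc \<longleftrightarrow>
     Oc \<in> gyroplane s A1 A2 A3 \<and>
     ein_gyrodist s A1 Oc = ein_gyrodist s A2 Oc \<and>
     ein_gyrodist s A1 Oc = ein_gyrodist s A3 Oc"

end

theory Submission
  imports Defs
begin

lemma alg0:
  fixes g a c :: real
  assumes "g > 0" "c * (1+g) = 1+g+g*a"
  shows "(1+a)\<^sup>2*g\<^sup>2 - c\<^sup>2*(g\<^sup>2-1) - 2*c*a*g = 1"
proof -
  have "((1+a)\<^sup>2*g\<^sup>2 - c\<^sup>2*(g\<^sup>2-1) - 2*c*a*g - 1)*(1+g)\<^sup>2 = 0"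
    using assms(2) by algebra
  moreover have "(1+g)\<^sup>2 \<noteq> 0" using assms(1) by simp
  ultimately show ?thesis by simp
qed

lemma gamma_basic:
  assumes "s > 0" "norm (v::real^'n) < s"
  shows "ein_gamma s v > 0" "(ein_gamma s v)\<^sup>2 * (1 - (v \<bullet> v) / s\<^sup>2) = 1"
    "1 - (v \<bullet> v) / s\<^sup>2 > 0"
proof -
  have n: "(norm v)\<^sup>2 < s\<^sup>2" using assms by (simp add: power_strict_mono)
  have p: "1 - (norm v)\<^sup>2 / s\<^sup>2 > 0" using n assms by (simp add: field_simps)
  show "ein_gamma s v > 0" using p by (simp add: ein_gamma_def)
  have hv: "v \<bullet> v = (norm v)\<^sup>2" by (simp add: power2_norm_eq_inner)
  have "(ein_gamma s v)\<^sup>2 = 1 / (1 - (norm v)\<^sup>2 / s\<^sup>2)"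
    using p by (simp add: ein_gamma_def power_divide)
  then show "(ein_gamma s v)\<^sup>2 * (1 - (v \<bullet> v) / s\<^sup>2) = 1"
    using p unfolding hv by (metis less_irrefl nonzero_divide_eq_eq)
  show "1 - (v \<bullet> v) / s\<^sup>2 > 0" using p hv by simp
qed

lemma gamma_eq:
  assumes "s > 0" "1 - (norm (v::real^'n))\<^sup>2 / s\<^sup>2 = t" "t > 0"
  shows "ein_gamma s v = 1 / sqrt t"
  using assms by (simp add: ein_gamma_def)

lemma add_norm:
  fixes u v :: "real^'n"
  assumes s: "s > 0" and u: "norm u < s" and v: "norm v < s"
  shows "1 - (norm (ein_add s u v))\<^sup>2 / s\<^sup>2
           = (1 - (u \<bullet> u)/s\<^sup>2) * (1 - (v \<bullet> v)/s\<^sup>2) / (1 + (u \<bullet> v)/s\<^sup>2)\<^sup>2"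
    and "1 + (u \<bullet> v)/s\<^sup>2 > 0"
proof -
  define g where "g = ein_gamma s u"
  define a where "a = (u \<bullet> v)/s\<^sup>2"
  define c where "c = 1 + (1 / s\<^sup>2) * (g / (1 + g)) * (u \<bullet> v)"
  have g0: "g > 0" and g1: "g\<^sup>2 * (1 - (u \<bullet> u) / s\<^sup>2) = 1"
    using gamma_basic[OF s u] by (auto simp: g_def)
  have "\<bar>u \<bullet> v\<bar> \<le> norm u * norm v" by (rule Cauchy_Schwarz_ineq2)
  also have "\<dots> < s * s" using u v s by (smt (verit) mult_strict_mono norm_ge_zero)
  finally have "\<bar>u \<bullet> v\<bar> < s\<^sup>2" by (simp add: power2_eq_square)
  then show apos: "1 + (u \<bullet> v)/s\<^sup>2 > 0" using s by (simp add: field_simps abs_less_iff)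
  have sg: "s\<^sup>2 + g * s\<^sup>2 > 0" "1 + g > 0" using g0 s by (simp_all add: add_pos_pos)
  have cdef: "c * (1+g) = 1+g+g*a" using g0 s sg unfolding c_def a_def by (simp add: field_simps)
  have key: "(1+a)\<^sup>2*g\<^sup>2 - c\<^sup>2*(g\<^sup>2-1) - 2*c*a*g = 1" by (rule alg0[OF g0 cdef])
  have e: "ein_add s u v = (1/(1+a)) *\<^sub>R (c *\<^sub>R u + (1/g) *\<^sub>R v)"
    unfolding ein_add_def g_def[symmetric] a_def c_def by (simp add: algebra_simps)
  have "(norm (ein_add s u v))\<^sup>2 = (ein_add s u v) \<bullet> (ein_add s u v)"
    by (simp add: power2_norm_eq_inner)
  also have "\<dots> = (1/(1+a))\<^sup>2 * (c\<^sup>2 * (u \<bullet> u) + 2*c*(1/g)*(u \<bullet> v) + (1/g)\<^sup>2 * (v \<bullet> v))"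
    unfolding e by (simp add: inner_add_left inner_add_right inner_commute power2_eq_square algebra_simps)
  finally have N: "(norm (ein_add s u v))\<^sup>2 = \<dots>" .
  have P: "u \<bullet> u = s\<^sup>2 * (1 - 1/g\<^sup>2)" using g1 g0 s by (simp add: field_simps)
  have X: "u \<bullet> v = a * s\<^sup>2" using s unfolding a_def by simp
  have a1: "1 + a \<noteq> 0" using apos a_def by simp
  have D: "(1+a)\<^sup>2 * g\<^sup>2 > 0" using a1 g0 by simp
  have h2: "(norm (ein_add s u v))\<^sup>2 * ((1+a)\<^sup>2 * g\<^sup>2) = s\<^sup>2 * (c\<^sup>2*(g\<^sup>2-1) + 2*c*a*g) + v \<bullet> v"
  proof -
    have "(norm (ein_add s u v))\<^sup>2 * ((1+a)\<^sup>2 * g\<^sup>2)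
       = (c\<^sup>2 * (u \<bullet> u) + 2*c*(1/g)*(u \<bullet> v) + (1/g)\<^sup>2 * (v \<bullet> v)) * g\<^sup>2"
      unfolding N using a1 by (simp add: power_divide)
    also have "\<dots> = s\<^sup>2 * (c\<^sup>2*(g\<^sup>2-1) + 2*c*a*g) + v \<bullet> v"
      unfolding P X using g0 by (simp add: field_simps power2_eq_square)
    finally show ?thesis .
  qed
  have "1 - (norm (ein_add s u v))\<^sup>2 / s\<^sup>2
      = ((1+a)\<^sup>2*g\<^sup>2 - c\<^sup>2*(g\<^sup>2-1) - 2*c*a*g - (v \<bullet> v)/s\<^sup>2) / ((1+a)\<^sup>2 * g\<^sup>2)"
  proof -
    have "(1 - (norm (ein_add s u v))\<^sup>2 / s\<^sup>2) * ((1+a)\<^sup>2 * g\<^sup>2)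
        = (1+a)\<^sup>2*g\<^sup>2 - (norm (ein_add s u v))\<^sup>2 * ((1+a)\<^sup>2 * g\<^sup>2) / s\<^sup>2"
      by (simp add: algebra_simps)
    also have "\<dots> = (1+a)\<^sup>2*g\<^sup>2 - c\<^sup>2*(g\<^sup>2-1) - 2*c*a*g - (v \<bullet> v)/s\<^sup>2"
      unfolding h2 using s by (simp add: field_simps)
    finally have F: "(1 - (norm (ein_add s u v))\<^sup>2 / s\<^sup>2) * ((1+a)\<^sup>2 * g\<^sup>2) = (1+a)\<^sup>2*g\<^sup>2 - c\<^sup>2*(g\<^sup>2-1) - 2*c*a*g - (v \<bullet> v)/s\<^sup>2" .
    show ?thesis using D F by (subst nonzero_eq_divide_eq) auto
  qed
  also have "\<dots> = (1 - (v \<bullet> v)/s\<^sup>2) / ((1+a)\<^sup>2 * g\<^sup>2)" using key by simp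
  also have "\<dots> = (1 - (u \<bullet> u)/s\<^sup>2) * (1 - (v \<bullet> v)/s\<^sup>2) / (1 + (u \<bullet> v)/s\<^sup>2)\<^sup>2"
    unfolding P using g0 s by (simp add: a_def field_simps)
  finally show "1 - (norm (ein_add s u v))\<^sup>2 / s\<^sup>2
           = (1 - (u \<bullet> u)/s\<^sup>2) * (1 - (v \<bullet> v)/s\<^sup>2) / (1 + (u \<bullet> v)/s\<^sup>2)\<^sup>2" .
qed

lemma add_gamma:
  fixes u v :: "real^'n"
  assumes s: "s > 0" and u: "norm u < s" and v: "norm v < s"
  shows "norm (ein_add s u v) < s"
    and "ein_gamma s (ein_add s u v) = ein_gamma s u * ein_gamma s v * (1 + (u \<bullet> v)/s\<^sup>2)"
proof -
  note H = add_norm[OF s u v]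
  have pu: "1 - (u \<bullet> u)/s\<^sup>2 > 0" and pv: "1 - (v \<bullet> v)/s\<^sup>2 > 0"
    using gamma_basic(3)[OF s u] gamma_basic(3)[OF s v] by auto
  have t: "(1 - (u \<bullet> u)/s\<^sup>2) * (1 - (v \<bullet> v)/s\<^sup>2) / (1 + (u \<bullet> v)/s\<^sup>2)\<^sup>2 > 0"
    using pu pv H(2) by simp
  have "(norm (ein_add s u v))\<^sup>2 / s\<^sup>2 < 1" using H(1) t by linarith
  then have "(norm (ein_add s u v))\<^sup>2 < s\<^sup>2" using s by (simp add: divide_less_eq)
  then show "norm (ein_add s u v) < s" using s by (smt (verit) power_mono norm_ge_zero)
  have "ein_gamma s (ein_add s u v) = 1 / sqrt ((1 - (u \<bullet> u)/s\<^sup>2) * (1 - (v \<bullet> v)/s\<^sup>2) / (1 + (u \<bullet> v)/s\<^sup>2)\<^sup>2)"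
    by (rule gamma_eq[OF s H(1) t])
  also have "\<dots> = (1 + (u \<bullet> v)/s\<^sup>2) / (sqrt (1 - (u \<bullet> u)/s\<^sup>2) * sqrt (1 - (v \<bullet> v)/s\<^sup>2))"
    using H(2) by (simp add: real_sqrt_mult real_sqrt_divide)
  also have "\<dots> = ein_gamma s u * ein_gamma s v * (1 + (u \<bullet> v)/s\<^sup>2)"
    by (simp add: ein_gamma_def power2_norm_eq_inner)
  finally show "ein_gamma s (ein_add s u v) = ein_gamma s u * ein_gamma s v * (1 + (u \<bullet> v)/s\<^sup>2)" .
qed

lemma gyro_gamma:
  fixes P Q :: "real^'n"
  assumes s: "s > 0" and "norm P < s" "norm Q < s"
  shows "norm (ein_add s (-P) Q) < s"
    and "ein_gamma s (ein_add s (-P) Q) = ein_gamma s P * ein_gamma s Q * (1 - (P \<bullet> Q)/s\<^sup>2)"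
  using add_gamma[OF s, of "-P" Q] assms by (auto simp: ein_gamma_def)

lemma self_zero:
  fixes P :: "real^'n"
  assumes s: "s > 0" and P: "norm P < s"
  shows "ein_add s (-P) P = 0"
proof -
  have n: "norm (- P) < s" using P by simp
  note H = add_norm[OF s n P]
  have pu: "1 - (P \<bullet> P)/s\<^sup>2 > 0" using gamma_basic(3)[OF s P] by auto
  have ee: "1 + (-P) \<bullet> P / s\<^sup>2 = 1 - (P \<bullet> P)/s\<^sup>2" "(-P) \<bullet> (-P) = P \<bullet> P" by simp_all
  have ne: "s * s \<noteq> P \<bullet> P" using pu s by (auto simp: field_simps power2_eq_square)
  have "1 - (norm (ein_add s (-P) P))\<^sup>2 / s\<^sup>2 = 1" using H(1) pu ne unfolding ee by (simp add: power2_eq_square)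
  then show ?thesis using s by simp
qed

lemma cancel:
  fixes P Q :: "real^'n"
  assumes s: "s > 0" and P: "norm P < s" and Q: "norm Q < s" and z: "ein_add s (-P) Q = 0"
  shows "Q = P"
proof -
  define u where "u = -P"
  have u: "norm u < s" using P u_def by simp
  define g where "g = ein_gamma s u"
  define a where "a = (u \<bullet> Q)/s\<^sup>2"
  define c where "c = 1 + (1 / s\<^sup>2) * (g / (1 + g)) * (u \<bullet> Q)"
  have g0: "g > 0" and g1: "g\<^sup>2 * (1 - (u \<bullet> u) / s\<^sup>2) = 1"
    using gamma_basic[OF s u] by (auto simp: g_def)
  have apos: "1 + a > 0" using add_norm(2)[OF s u Q] a_def by simp
  have sg: "s\<^sup>2 + g * s\<^sup>2 > 0" "1 + g > 0" using g0 s by (simp_all add: add_pos_pos)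
  have cdef: "c * (1+g) = 1+g+g*a" using g0 s sg unfolding c_def a_def by (simp add: field_simps)
  have e: "ein_add s u Q = (1/(1+a)) *\<^sub>R (c *\<^sub>R u + (1/g) *\<^sub>R Q)"
    unfolding ein_add_def g_def[symmetric] a_def c_def by (simp add: algebra_simps)
  have "c *\<^sub>R u + (1/g) *\<^sub>R Q = 0" using z e apos unfolding u_def by simp
  then have "g *\<^sub>R (c *\<^sub>R u + (1/g) *\<^sub>R Q) = 0" by simp
  then have Qe: "Q = - (g*c) *\<^sub>R u" using g0 by (simp add: algebra_simps eq_neg_iff_add_eq_0)
  have "a = - (g*c) * (u \<bullet> u) / s\<^sup>2" unfolding a_def Qe by simp
  also have "u \<bullet> u = s\<^sup>2 * (1 - 1/g\<^sup>2)" using g1 g0 s by (simp add: field_simps)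
  finally have a3: "a = - (g*c) * (1 - 1/g\<^sup>2)" using s by simp
  have a2: "a * g = - c * (g\<^sup>2 - 1)" unfolding a3 using g0 by (simp add: field_simps power2_eq_square)
  have "c * g * (1 + g) = 1 + g" using cdef a2 by (simp add: algebra_simps power2_eq_square)
  then have "c * g = 1" using sg by simp
  then show ?thesis using Qe u_def by (simp add: mult.commute)
qed

lemma C1alg:
  fixes s g1 g2 g3 m1 m2 m3 x11 x22 x33 x12 x13 x23 :: real
  assumes s: "s > 0"
   and h1: "g1\<^sup>2 * (1 - x11 / s\<^sup>2) = 1" and h2: "g2\<^sup>2 * (1 - x22 / s\<^sup>2) = 1" and h3: "g3\<^sup>2 * (1 - x33 / s\<^sup>2) = 1"
  shows "(m1*g1 + m2*g2 + m3*g3)\<^sup>2 - ((m1*g1)\<^sup>2*x11 + (m2*g2)\<^sup>2*x22 + (m3*g3)\<^sup>2*x33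
          + 2*(m1*g1)*(m2*g2)*x12 + 2*(m1*g1)*(m3*g3)*x13 + 2*(m2*g2)*(m3*g3)*x23)/s\<^sup>2
       = (m1+m2+m3)\<^sup>2 + 2*(m1*m2*(g1*g2*(1 - x12/s\<^sup>2) - 1) + m1*m3*(g1*g3*(1 - x13/s\<^sup>2) - 1) + m2*m3*(g2*g3*(1 - x23/s\<^sup>2) - 1))"
proof -
  have k1: "g1\<^sup>2 * x11 = s\<^sup>2 * (g1\<^sup>2 - 1)" using h1 s by (simp add: field_simps)
  have k2: "g2\<^sup>2 * x22 = s\<^sup>2 * (g2\<^sup>2 - 1)" using h2 s by (simp add: field_simps)
  have k3: "g3\<^sup>2 * x33 = s\<^sup>2 * (g3\<^sup>2 - 1)" using h3 s by (simp add: field_simps)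
  have "(m1*g1)\<^sup>2*x11 + (m2*g2)\<^sup>2*x22 + (m3*g3)\<^sup>2*x33
          + 2*(m1*g1)*(m2*g2)*x12 + 2*(m1*g1)*(m3*g3)*x13 + 2*(m2*g2)*(m3*g3)*x23
      = m1\<^sup>2*(g1\<^sup>2*x11) + m2\<^sup>2*(g2\<^sup>2*x22) + m3\<^sup>2*(g3\<^sup>2*x33)
          + 2*(m1*g1)*(m2*g2)*x12 + 2*(m1*g1)*(m3*g3)*x13 + 2*(m2*g2)*(m3*g3)*x23"
    by (simp add: power_mult_distrib)
  also have "\<dots> = m1\<^sup>2*(s\<^sup>2 * (g1\<^sup>2 - 1)) + m2\<^sup>2*(s\<^sup>2 * (g2\<^sup>2 - 1)) + m3\<^sup>2*(s\<^sup>2 * (g3\<^sup>2 - 1))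
          + 2*(m1*g1)*(m2*g2)*x12 + 2*(m1*g1)*(m3*g3)*x13 + 2*(m2*g2)*(m3*g3)*x23"
    unfolding k1 k2 k3 ..
  finally have E: "(m1*g1)\<^sup>2*x11 + (m2*g2)\<^sup>2*x22 + (m3*g3)\<^sup>2*x33
          + 2*(m1*g1)*(m2*g2)*x12 + 2*(m1*g1)*(m3*g3)*x13 + 2*(m2*g2)*(m3*g3)*x23 = \<dots>" .
  show ?thesis unfolding E using s by (simp add: field_simps power2_eq_square)
qed

theorem mainTheorem12:
  fixes s R d m1 m2 m3 :: real and A1 A2 A3 Oc A :: "real^'n"
  assumes "s > 0" and "CARD('n) \<ge> 2"
    and "gyrotriangle s A1 A2 A3"
    and "circumgyrocenter s A1 A2 A3 Oc"
    and "R = ein_gyrodist s A1 Oc"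
    and "A \<in> gyroplane s A1 A2 A3"
    and "m1 * ein_gamma s A1 + m2 * ein_gamma s A2 + m3 * ein_gamma s A3 \<noteq> 0"
    and "A = (1 / (m1 * ein_gamma s A1 + m2 * ein_gamma s A2 + m3 * ein_gamma s A3)) *\<^sub>R
               ((m1 * ein_gamma s A1) *\<^sub>R A1 + (m2 * ein_gamma s A2) *\<^sub>R A2
                 + (m3 * ein_gamma s A3) *\<^sub>R A3)"
    and "m1 + m2 + m3 \<noteq> 0"
    and "d = ein_gyrodist s A Oc"
  shows "d = sqrt (1 - 2 * s\<^sup>2 *
                 (m1 * m2 * (ein_gamma s (ein_add s (- A1) A2) - 1)
                + m1 * m3 * (ein_gamma s (ein_add s (- A1) A3) - 1)
                + m2 * m3 * (ein_gamma s (ein_add s (- A2) A3) - 1))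
               / ((m1 + m2 + m3)\<^sup>2 * (1 / sqrt (1 - R\<^sup>2 / s\<^sup>2))\<^sup>2 * R\<^sup>2)) * R"
proof -
  note s = assms(1)
  have b1: "norm A1 < s" and b2: "norm A2 < s" and b3: "norm A3 < s"
    and indep: "\<And>a b. a *\<^sub>R ein_add s (- A1) A2 + b *\<^sub>R ein_add s (- A1) A3 = 0 \<Longrightarrow> a = 0 \<and> b = 0"
    using assms(3) unfolding gyrotriangle_def ein_ball_def by auto
  have bO: "norm Oc < s" and eq2: "ein_gyrodist s A1 Oc = ein_gyrodist s A2 Oc"
    and eq3: "ein_gyrodist s A1 Oc = ein_gyrodist s A3 Oc"
    using assms(4) unfolding circumgyrocenter_def gyroplane_def ein_ball_def by auto
  have bA: "norm A < s" using assms(6) unfolding gyroplane_def ein_ball_def by auto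
  define g1 where "g1 = ein_gamma s A1"
  define g2 where "g2 = ein_gamma s A2"
  define g3 where "g3 = ein_gamma s A3"
  define gO where "gO = ein_gamma s Oc"
  define gA where "gA = ein_gamma s A"
  define gR where "gR = ein_gamma s (ein_add s (- A1) Oc)"
  define g12 where "g12 = ein_gamma s (ein_add s (- A1) A2)"
  define g13 where "g13 = ein_gamma s (ein_add s (- A1) A3)"
  define g23 where "g23 = ein_gamma s (ein_add s (- A2) A3)"
  define gAO where "gAO = ein_gamma s (ein_add s (- A) Oc)"
  define N where "N = m1 * g1 + m2 * g2 + m3 * g3"
  define M where "M = m1 + m2 + m3"
  define K where "K = m1 * m2 * (g12 - 1) + m1 * m3 * (g13 - 1) + m2 * m3 * (g23 - 1)"
  define S where "S = (m1 * g1) *\<^sub>R A1 + (m2 * g2) *\<^sub>R A2 + (m3 * g3) *\<^sub>R A3"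
  have AS: "A = (1/N) *\<^sub>R S" using assms(8) unfolding N_def S_def g1_def g2_def g3_def by simp
  have N0: "N \<noteq> 0" using assms(7) unfolding N_def g1_def g2_def g3_def by simp
  have M0: "M \<noteq> 0" using assms(9) M_def by simp
  have R_def': "R = norm (ein_add s (- A1) Oc)" using assms(5) by (simp add: ein_gyrodist_def)
  have d_def': "d = norm (ein_add s (- A) Oc)" using assms(10) by (simp add: ein_gyrodist_def)
  have gRR: "1 / sqrt (1 - R\<^sup>2 / s\<^sup>2) = gR" unfolding gR_def R_def' ein_gamma_def ..
  have g1b: "g1\<^sup>2 * (1 - (A1 \<bullet> A1) / s\<^sup>2) = 1" using gamma_basic(2)[OF s b1] g1_def by simp
  have g2b: "g2\<^sup>2 * (1 - (A2 \<bullet> A2) / s\<^sup>2) = 1" using gamma_basic(2)[OF s b2] g2_def by simp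
  have g3b: "g3\<^sup>2 * (1 - (A3 \<bullet> A3) / s\<^sup>2) = 1" using gamma_basic(2)[OF s b3] g3_def by simp
  have gAb: "gA\<^sup>2 * (1 - (A \<bullet> A) / s\<^sup>2) = 1" using gamma_basic(2)[OF s bA] gA_def by simp
  have pA: "1 - (A \<bullet> A) / s\<^sup>2 > 0" using gamma_basic(3)[OF s bA] by simp
  have e12: "g12 = g1 * g2 * (1 - (A1 \<bullet> A2)/s\<^sup>2)" using gyro_gamma(2)[OF s b1 b2] g12_def g1_def g2_def by simp
  have e13: "g13 = g1 * g3 * (1 - (A1 \<bullet> A3)/s\<^sup>2)" using gyro_gamma(2)[OF s b1 b3] g13_def g1_def g3_def by simp
  have e23: "g23 = g2 * g3 * (1 - (A2 \<bullet> A3)/s\<^sup>2)" using gyro_gamma(2)[OF s b2 b3] g23_def g2_def g3_def by simp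
  have gsame: "ein_gamma s (ein_add s (- A2) Oc) = gR" "ein_gamma s (ein_add s (- A3) Oc) = gR"
    using eq2 eq3 unfolding gR_def ein_gamma_def ein_gyrodist_def by simp_all
  have e1O: "gR = g1 * gO * (1 - (A1 \<bullet> Oc)/s\<^sup>2)" using gyro_gamma(2)[OF s b1 bO] gR_def g1_def gO_def by simp
  have e2O: "gR = g2 * gO * (1 - (A2 \<bullet> Oc)/s\<^sup>2)" using gyro_gamma(2)[OF s b2 bO] gsame g2_def gO_def by simp
  have e3O: "gR = g3 * gO * (1 - (A3 \<bullet> Oc)/s\<^sup>2)" using gyro_gamma(2)[OF s b3 bO] gsame g3_def gO_def by simp
  have eAO: "gAO = gA * gO * (1 - (A \<bullet> Oc)/s\<^sup>2)" using gyro_gamma(2)[OF s bA bO] gAO_def gA_def gO_def by simp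
  have bAO: "norm (ein_add s (- A) Oc) < s" using gyro_gamma(1)[OF s bA bO] .
  have bR: "norm (ein_add s (- A1) Oc) < s" using gyro_gamma(1)[OF s b1 bO] .
  have gAOb: "gAO\<^sup>2 * (1 - d\<^sup>2 / s\<^sup>2) = 1"
    using gamma_basic(2)[OF s bAO] gAO_def d_def' by (simp add: power2_norm_eq_inner)
  have gRb: "gR\<^sup>2 * (1 - R\<^sup>2 / s\<^sup>2) = 1"
    using gamma_basic(2)[OF s bR] gR_def R_def' by (simp add: power2_norm_eq_inner)
  have gR0: "gR > 0" using gamma_basic(1)[OF s bR] gR_def by simp
  have SS: "S \<bullet> S = (m1*g1)\<^sup>2*(A1 \<bullet> A1) + (m2*g2)\<^sup>2*(A2 \<bullet> A2) + (m3*g3)\<^sup>2*(A3 \<bullet> A3)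
          + 2*(m1*g1)*(m2*g2)*(A1 \<bullet> A2) + 2*(m1*g1)*(m3*g3)*(A1 \<bullet> A3) + 2*(m2*g2)*(m3*g3)*(A2 \<bullet> A3)"
    unfolding S_def by (simp add: inner_add_left inner_add_right inner_commute algebra_simps power2_eq_square)
  have C1: "N\<^sup>2 - (S \<bullet> S)/s\<^sup>2 = M\<^sup>2 + 2*K"
    unfolding SS N_def M_def K_def e12 e13 e23 by (rule C1alg[OF s g1b g2b g3b])
  have gO0: "gO > 0" using gamma_basic(1)[OF s bO] gO_def by simp
  have SO: "S \<bullet> Oc = m1*g1*(A1 \<bullet> Oc) + m2*g2*(A2 \<bullet> Oc) + m3*g3*(A3 \<bullet> Oc)"
    unfolding S_def by (simp add: inner_add_left)
  have f1: "g1 * (1 - (A1 \<bullet> Oc)/s\<^sup>2) = gR / gO" using e1O gO0 by (simp add: field_simps)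
  have f2: "g2 * (1 - (A2 \<bullet> Oc)/s\<^sup>2) = gR / gO" using e2O gO0 by (simp add: field_simps)
  have f3: "g3 * (1 - (A3 \<bullet> Oc)/s\<^sup>2) = gR / gO" using e3O gO0 by (simp add: field_simps)
  have C2: "N - (S \<bullet> Oc)/s\<^sup>2 = M * gR / gO"
  proof -
    have "N - (S \<bullet> Oc)/s\<^sup>2 = m1 * (g1 * (1 - (A1 \<bullet> Oc)/s\<^sup>2)) + m2 * (g2 * (1 - (A2 \<bullet> Oc)/s\<^sup>2))
          + m3 * (g3 * (1 - (A3 \<bullet> Oc)/s\<^sup>2))"
      unfolding SO N_def by (simp add: algebra_simps add_divide_distrib)
    also have "\<dots> = M * gR / gO" unfolding f1 f2 f3 M_def by (simp add: algebra_simps add_divide_distrib)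
    finally show ?thesis .
  qed
  have AA: "A \<bullet> A = (S \<bullet> S) / N\<^sup>2" unfolding AS by (simp add: power2_eq_square)
  have AO: "A \<bullet> Oc = (S \<bullet> Oc) / N" unfolding AS by simp
  have Q1: "N\<^sup>2 * (1 - (A \<bullet> A)/s\<^sup>2) = M\<^sup>2 + 2*K"
    unfolding C1[symmetric] AA using N0 by (simp add: field_simps)
  have Q2: "N * (1 - (A \<bullet> Oc)/s\<^sup>2) = M * gR / gO"
    unfolding C2[symmetric] AO using N0 by (simp add: field_simps)
  have Qpos: "M\<^sup>2 + 2*K > 0" using Q1[symmetric] N0 pA by simp
  have gAQ: "gA\<^sup>2 * (M\<^sup>2 + 2*K) = N\<^sup>2" unfolding Q1[symmetric] using gAb
    by (metis mult.assoc mult.commute mult.right_neutral)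
  have "gAO\<^sup>2 * (M\<^sup>2 + 2*K) = (gA\<^sup>2 * (M\<^sup>2 + 2*K)) * gO\<^sup>2 * (1 - (A \<bullet> Oc)/s\<^sup>2)\<^sup>2"
    unfolding eAO by (simp add: power_mult_distrib)
  also have "\<dots> = (N * (1 - (A \<bullet> Oc)/s\<^sup>2))\<^sup>2 * gO\<^sup>2" unfolding gAQ by (simp add: power_mult_distrib)
  also have "\<dots> = (M * gR)\<^sup>2" unfolding Q2 using gO0 by (simp add: power_divide)
  finally have gAOQ: "gAO\<^sup>2 * (M\<^sup>2 + 2*K) = (M * gR)\<^sup>2" .
  have "(M\<^sup>2 + 2*K) = (M * gR)\<^sup>2 * (1 - d\<^sup>2 / s\<^sup>2)"
    unfolding gAOQ[symmetric] using gAOb by (metis mult.assoc mult.commute mult.right_neutral)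
  then have dsq: "d\<^sup>2 = s\<^sup>2 * (1 - (M\<^sup>2 + 2*K) / (M * gR)\<^sup>2)"
    using M0 gR0 s by (simp add: field_simps)
  have Rsq: "R\<^sup>2 = s\<^sup>2 * (1 - 1 / gR\<^sup>2)" using gRb gR0 s by (simp add: field_simps)
  have E: "s * s + R * (R * (gR * gR)) = gR * (gR * (s * s))"
    using gRb s by (simp add: field_simps power2_eq_square)
  have R0: "R \<noteq> 0"
  proof
    assume R0: "R = 0"
    have z1: "ein_add s (- A1) Oc = 0" using R0 R_def' by simp
    have z2: "ein_add s (- A2) Oc = 0" using R0 assms(5) eq2 by (simp add: ein_gyrodist_def)
    have z3: "ein_add s (- A3) Oc = 0" using R0 assms(5) eq3 by (simp add: ein_gyrodist_def)
    have "Oc = A1" "Oc = A2" using cancel[OF s b1 bO z1] cancel[OF s b2 bO z2] by auto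
    then have "ein_add s (- A1) A2 = 0" using self_zero[OF s b1] by simp
    then show False using indep[of 1 0] by simp
  qed
  have dge: "d \<ge> 0" using d_def' by simp
  have Rge: "R \<ge> 0" using R_def' by simp
  have "(1 - 2 * s\<^sup>2 * K / (M\<^sup>2 * gR\<^sup>2 * R\<^sup>2)) * R\<^sup>2 = d\<^sup>2"
    unfolding dsq using R0 gR0 M0 s by (simp add: field_simps power2_eq_square) (metis E distrib_left)
  then have "sqrt (1 - 2 * s\<^sup>2 * K / (M\<^sup>2 * gR\<^sup>2 * R\<^sup>2)) * R = d"
    using dge Rge by (metis real_sqrt_abs real_sqrt_mult abs_of_nonneg)
  then show ?thesis unfolding gRR using K_def M_def g12_def g13_def g23_def by simp
qed

end
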